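(* Let $G$ be a graph and suppose we have a valid edge partition of $G$. Then the number of cycles compatible with this edge partition equals the number of edges of $G$ which lie in the spanning-tree part of the edge partition and whose two ends lie in the same tree of the 2-forest.
   Context: A spanning 2-forest is a spanning forest with exactly two trees (a tree may be a single vertex). A valid edge partition of a graph is a bipartition of its edge set such that one part is the edge set of a spanning tree and the other part is the edge set of a spanning 2-forest. A valid edge partition induces a bipartition of the vertex set according to which tree of the 2-forest each vertex lies in. A cycle $C$ is compatible with the valid edge partition if all vertices of $C$ lie in the same part of this vertex bipartition and exactly one edge of $C$ lies in the spanning-tree part of the edge partition. *)

theory Defs
  imports Main
begin

definition simple_graph :: "'a set \<Rightarrow> 'a set set \<Rightarrow> bool" where
  "simple_graph V E \<longleftrightarrow> finite V \<and>
     (\<forall>e\<in>E. \<exists>u v. e = {u, v} \<and> u \<noteq> v \<and> u \<in> V \<and> v \<in> V)"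

definition is_cycle :: "'a set set \<Rightarrow> bool" where
  "is_cycle C \<longleftrightarrow> (\<exists>vs. length vs \<ge> 3 \<and> distinct vs \<and>
      C = (\<lambda>i. {vs ! i, vs ! (Suc i mod length vs)}) ` {..<length vs})"

definition conn :: "'a set set \<Rightarrow> 'a \<Rightarrow> 'a \<Rightarrow> bool" where
  "conn F u v \<longleftrightarrow> (\<lambda>x y. {x, y} \<in> F)\<^sup>*\<^sup>* u v"

definition acyclic_edges :: "'a set set \<Rightarrow> bool" where
  "acyclic_edges F \<longleftrightarrow> \<not> (\<exists>C. C \<subseteq> F \<and> is_cycle C)"

definition components :: "'a set \<Rightarrow> 'a set set \<Rightarrow> 'a set set" where
  "components V F = (\<lambda>u. {v \<in> V. conn F u v}) ` V"

definition spanning_tree :: "'a set \<Rightarrow> 'a set set \<Rightarrow> 'a set set \<Rightarrow> bool" where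
  "spanning_tree V E T \<longleftrightarrow> T \<subseteq> E \<and> acyclic_edges T \<and>
     (\<forall>u\<in>V. \<forall>v\<in>V. conn T u v)"

text \<open>A spanning forest with exactly two trees (a tree may be a single vertex).\<close>
definition spanning_2forest :: "'a set \<Rightarrow> 'a set set \<Rightarrow> 'a set set \<Rightarrow> bool" where
  "spanning_2forest V E F \<longleftrightarrow> F \<subseteq> E \<and> acyclic_edges F \<and> card (components V F) = 2"

definition valid_edge_partition :: "'a set \<Rightarrow> 'a set set \<Rightarrow> 'a set set \<Rightarrow> 'a set set \<Rightarrow> bool" where
  "valid_edge_partition V E T F \<longleftrightarrow> T \<union> F = E \<and> T \<inter> F = {} \<and>
     spanning_tree V E T \<and> spanning_2forest V E F"

definition compatible :: "'a set set \<Rightarrow> 'a set set \<Rightarrow> 'a set set \<Rightarrow> bool" where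
  "compatible T F C \<longleftrightarrow> (\<forall>u\<in>\<Union>C. \<forall>v\<in>\<Union>C. conn F u v) \<and> card (C \<inter> T) = 1"

end

theory Submission
  imports Defs
begin

fun pedges :: "'a list \<Rightarrow> 'a set set" where
  "pedges (x#y#zs) = insert {x,y} (pedges (y#zs))"
| "pedges _ = {}"

lemma pedges_append:
  "pedges (xs@ys) = pedges xs \<union> pedges ys \<union> (if xs=[] \<or> ys=[] then {} else {{last xs, hd ys}})"
  by (induction xs rule: pedges.induct; cases ys) auto

lemma pedges_nth: "pedges xs = (\<lambda>i. {xs!i, xs!Suc i}) ` {..<length xs - 1}"
proof (induction xs rule: pedges.induct)
  case (1 x y zs)
  have l: "length (x#y#zs) - 1 = Suc (length (y#zs) - 1)" by simp
  have "(\<lambda>i. {(x#y#zs)!i, (x#y#zs)!Suc i}) ` {..<Suc (length (y#zs) - 1)}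
     = insert {x,y} ((\<lambda>i. {(y#zs)!i, (y#zs)!Suc i}) ` {..<length (y#zs) - 1})"
    unfolding lessThan_Suc_eq_insert_0 image_insert image_image by simp
  then show ?case unfolding l using 1 by simp
qed auto

lemma pedges_subset: "e \<in> pedges xs \<Longrightarrow> e \<subseteq> set xs"
  by (induction xs rule: pedges.induct) auto

lemma pedges_split: "e \<in> pedges xs \<Longrightarrow> \<exists>ys a b zs. xs = ys@a#b#zs \<and> e = {a,b}"
proof (induction xs rule: pedges.induct)
  case (1 x y zs)
  show ?case
  proof (cases "e = {x,y}")
    case True then show ?thesis by (metis append_Nil)
  next
    case False
    then obtain ys a b ws where "y#zs = ys@a#b#ws" "e={a,b}" using 1 by auto
    then show ?thesis by (metis append_Cons)
  qed
qed auto

lemma pedges_rev: "pedges (rev xs) = pedges xs"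
proof (induction xs)
  case (Cons x xs)
  have "pedges (rev (x#xs)) = pedges (rev xs @ [x])" by simp
  also have "\<dots> = pedges xs \<union> (if xs = [] then {} else {{hd xs, x}})"
    using Cons by (simp add: pedges_append last_rev)
  also have "\<dots> = pedges ([x] @ xs)"
    by (subst pedges_append) (auto simp: insert_commute)
  finally show ?case by simp
qed simp

lemma conn_mono: "conn G a b \<Longrightarrow> G \<subseteq> H \<Longrightarrow> conn H a b"
  unfolding conn_def by (induction rule: rtranclp_induct) (auto intro: rtranclp.rtrancl_into_rtrancl)

lemma conn_trans: "conn G a b \<Longrightarrow> conn G b c \<Longrightarrow> conn G a c"
  unfolding conn_def by simp

lemma conn_sym: "conn G a b \<Longrightarrow> conn G b a"
  unfolding conn_def
proof (induction rule: rtranclp_induct)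
  case (step y z)
  have "{z, y} \<in> G" using step(2) by (simp add: insert_commute)
  then show ?case using step(3) by (rule converse_rtranclp_into_rtranclp)
qed simp

lemma conn_path: "pedges xs \<subseteq> G \<Longrightarrow> x \<in> set xs \<Longrightarrow> conn G (hd xs) x"
proof (induction xs rule: pedges.induct)
  case (1 a b zs)
  show ?case
  proof (cases "x = a")
    case True then show ?thesis by (simp add: conn_def)
  next
    case False
    then have "conn G b x" using 1 by auto
    moreover have "conn G a b" using 1 unfolding conn_def by (simp add: r_into_rtranclp)
    ultimately show ?thesis using conn_trans by fastforce
  qed
qed (auto simp: conn_def)

lemma walk_to_path: "conn G a b \<Longrightarrow>
  \<exists>xs. distinct xs \<and> xs \<noteq> [] \<and> hd xs = a \<and> last xs = b \<and> pedges xs \<subseteq> G"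
  unfolding conn_def
proof (induction rule: converse_rtranclp_induct)
  case base then show ?case by (intro exI[of _ "[b]"]) auto
next
  case (step a y)
  then obtain xs where xs: "distinct xs" "xs \<noteq> []" "hd xs = y" "last xs = b" "pedges xs \<subseteq> G" by blast
  show ?case
  proof (cases "a \<in> set xs")
    case True
    then obtain ys zs where sp: "xs = ys @ a # zs" by (meson split_list)
    have "pedges (a#zs) \<subseteq> G" using xs(5) sp pedges_append[of ys "a#zs"] by auto
    moreover have "last (a#zs) = b" using xs(4) sp by simp
    ultimately show ?thesis using xs(1) sp by (intro exI[of _ "a#zs"]) auto
  next
    case False
    have "pedges (a#xs) \<subseteq> G" using xs step(1) by (cases xs) auto
    then show ?thesis using False xs by (intro exI[of _ "a#xs"]) auto
  qed
qed

lemma cycle_iff: "is_cycle C \<longleftrightarrow> (\<exists>vs. length vs \<ge> 3 \<and> distinct vs \<and> C = insert {hd vs, last vs} (pedges vs))"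
proof -
  have H: "(\<lambda>i. {vs ! i, vs ! (Suc i mod length vs)}) ` {..<length vs} = insert {hd vs, last vs} (pedges vs)"
    if "length vs \<ge> 3" for vs :: "'a list"
  proof -
    let ?n = "length vs"
    have e: "{..<?n} = insert (?n - 1) {..<?n - 1}" using that by auto
    have a: "(\<lambda>i. {vs ! i, vs ! (Suc i mod ?n)}) ` {..<?n - 1} = pedges vs"
      unfolding pedges_nth by (rule image_cong) auto
    have s0: "Suc (?n - 1) = ?n" using that by simp
    have s: "Suc (?n - 1) mod ?n = 0" unfolding s0 by simp
    have b: "{vs ! (?n - 1), vs ! (Suc (?n - 1) mod ?n)} = {hd vs, last vs}"
    proof -
      have ne: "vs \<noteq> []" using that by auto
      show ?thesis unfolding s using ne by (auto simp: last_conv_nth hd_conv_nth)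
    qed
    show ?thesis by (subst e, simp only: image_insert a b)
  qed
  show ?thesis unfolding is_cycle_def
  proof
    assume "\<exists>vs. 3 \<le> length vs \<and> distinct vs \<and> C = (\<lambda>i. {vs ! i, vs ! (Suc i mod length vs)}) ` {..<length vs}"
    then obtain vs where v: "3 \<le> length vs" "distinct vs" "C = (\<lambda>i. {vs ! i, vs ! (Suc i mod length vs)}) ` {..<length vs}" by blast
    then have "C = insert {hd vs, last vs} (pedges vs)" using H[OF v(1)] by simp
    then show "\<exists>vs. length vs \<ge> 3 \<and> distinct vs \<and> C = insert {hd vs, last vs} (pedges vs)"
      using v by blast
  next
    assume "\<exists>vs. length vs \<ge> 3 \<and> distinct vs \<and> C = insert {hd vs, last vs} (pedges vs)"
    then obtain vs where v: "3 \<le> length vs" "distinct vs" "C = insert {hd vs, last vs} (pedges vs)" by blast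
    then have "C = (\<lambda>i. {vs ! i, vs ! (Suc i mod length vs)}) ` {..<length vs}" using H[OF v(1)] by simp
    then show "\<exists>vs. 3 \<le> length vs \<and> distinct vs \<and> C = (\<lambda>i. {vs ! i, vs ! (Suc i mod length vs)}) ` {..<length vs}"
      using v by blast
  qed
qed


lemma path_len3:
  assumes "xs \<noteq> []" "hd xs \<noteq> last xs" "{hd xs, last xs} \<notin> pedges xs"
  shows "length xs \<ge> 3"
  using assms
proof (cases xs rule: pedges.cases)
  case (1 x y zs)
  then show ?thesis using assms by (cases zs) auto
qed auto

lemma closing_not_in:
  assumes "distinct vs" "length vs \<ge> 3"
  shows "{hd vs, last vs} \<notin> pedges vs"
proof
  assume "{hd vs, last vs} \<in> pedges vs"
  from pedges_split[OF this] obtain ps a b qs where sp: "vs = ps@a#b#qs" "{hd vs, last vs} = {a,b}"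
    by blast
  have d: "a \<notin> set ps" "b \<notin> set ps" "a \<noteq> b" "a \<notin> set qs" "b \<notin> set qs"
    using assms(1) sp(1) by auto
  have "ps = []"
  proof (rule ccontr)
    assume "ps \<noteq> []"
    then have "hd vs \<in> set ps" using sp(1) by simp
    moreover have "hd vs \<in> {a,b}" using sp(2) by blast
    ultimately show False using d by auto
  qed
  have "qs = []"
  proof (rule ccontr)
    assume "qs \<noteq> []"
    then have "last vs \<in> set qs" using sp(1) by simp
    moreover have "last vs \<in> {a,b}" using sp(2) by blast
    ultimately show False using d by auto
  qed
  then show False using \<open>ps = []\<close> sp(1) assms(2) by simp
qed

lemma cyc_from_conn:
  assumes "{a,b} \<in> F" "a \<noteq> b" "conn (F - {{a,b}}) a b"
  shows "\<not> acyclic_edges F"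
proof -
  obtain xs where xs: "distinct xs" "xs \<noteq> []" "hd xs = a" "last xs = b" "pedges xs \<subseteq> F - {{a,b}}"
    using walk_to_path[OF assms(3)] by blast
  have "length xs \<ge> 3" using path_len3[OF xs(2)] xs assms(2) by blast
  then have "is_cycle (insert {hd xs, last xs} (pedges xs))" unfolding cycle_iff using xs(1) by blast
  moreover have "insert {hd xs, last xs} (pedges xs) \<subseteq> F" using xs assms(1) by auto
  ultimately show ?thesis unfolding acyclic_edges_def by blast
qed

lemma path_unique:
  assumes ac: "acyclic_edges F" and dx: "distinct xs" and nx: "xs \<noteq> []" and ny: "ys \<noteq> []"
    and h: "hd xs = hd ys" and l: "last xs = last ys"
    and px: "pedges xs \<subseteq> F" and py: "pedges ys \<subseteq> F"
  shows "pedges xs \<subseteq> pedges ys"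
proof
  fix f assume f: "f \<in> pedges xs"
  show "f \<in> pedges ys"
  proof (rule ccontr)
    assume nf: "f \<notin> pedges ys"
    obtain ps a b qs where sp: "xs = ps@a#b#qs" "f = {a,b}" using pedges_split[OF f] by blast
    have ab: "a \<noteq> b" using dx sp by auto
    have pe: "pedges xs = pedges (ps@[a]) \<union> pedges (b#qs) \<union> {{a,b}}"
      using pedges_append[of "ps@[a]" "b#qs"] sp(1) by simp
    have nfa: "f \<notin> pedges (ps@[a])"
    proof
      assume "f \<in> pedges (ps@[a])"
      then have "b \<in> set (ps@[a])" using pedges_subset sp(2) by blast
      then show False using dx sp(1) by auto
    qed
    have nfb: "f \<notin> pedges (b#qs)"
    proof
      assume "f \<in> pedges (b#qs)"
      then have "a \<in> set (b#qs)" using pedges_subset sp(2) by blast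
      then show False using dx sp(1) by auto
    qed
    have c1: "conn (F - {f}) (hd xs) a"
    proof -
      have "conn (F - {f}) (hd (ps@[a])) a" using conn_path[of "ps@[a]" "F - {f}" a] pe px nfa by auto
      moreover have "hd (ps@[a]) = hd xs" using sp(1) by (cases ps) auto
      ultimately show ?thesis by simp
    qed
    have c2: "conn (F - {f}) b (last xs)"
    proof -
      have "pedges (b#qs) \<subseteq> F - {f}" using pe px nfb by auto
      from conn_path[OF this, of "last (b#qs)"] have "conn (F - {f}) (hd (b#qs)) (last (b#qs))" by simp
      moreover have "last (b#qs) = last xs" using sp(1) by simp
      ultimately show ?thesis by simp
    qed
    have c3: "conn (F - {f}) (hd ys) (last ys)"
      using conn_path[of ys "F - {f}" "last ys"] py nf ny by auto
    have "conn (F - {f}) a b"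
      using conn_trans[OF conn_trans[OF conn_sym[OF c1] c3[folded h l]] conn_sym[OF c2]] .
    then show False using cyc_from_conn[of a b F] ab px f sp(2) ac by auto
  qed
qed

lemma decomp:
  assumes "is_cycle C" "e \<in> C"
  shows "\<exists>xs. distinct xs \<and> length xs \<ge> 3 \<and> C = insert e (pedges xs) \<and> e = {hd xs, last xs}"
proof -
  obtain vs where vs: "length vs \<ge> 3" "distinct vs" "C = insert {hd vs, last vs} (pedges vs)"
    using assms(1) unfolding cycle_iff by blast
  show ?thesis
  proof (cases "e = {hd vs, last vs}")
    case True then show ?thesis using vs by blast
  next
    case False
    then have "e \<in> pedges vs" using vs(3) assms(2) by blast
    then obtain ps a b qs where sp: "vs = ps@a#b#qs" "e = {a,b}" using pedges_split by blast
    define xs where "xs = (b#qs) @ (ps@[a])"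
    have p1: "pedges vs = pedges (ps@[a]) \<union> pedges (b#qs) \<union> {{a,b}}"
      using pedges_append[of "ps@[a]" "b#qs"] sp(1) by simp
    have p2: "pedges xs = pedges (b#qs) \<union> pedges (ps@[a]) \<union> {{last (b#qs), hd (ps@[a])}}"
      using pedges_append[of "b#qs" "ps@[a]"] xs_def by simp
    have hv: "hd (ps@[a]) = hd vs" using sp(1) by (cases ps) auto
    have lv: "last (b#qs) = last vs" using sp(1) by simp
    have p3: "pedges xs = pedges (b#qs) \<union> pedges (ps@[a]) \<union> {{last vs, hd vs}}"
      using p2 unfolding hv lv .
    have "{last vs, hd vs} = {hd vs, last vs}" by (rule insert_commute)
    then have "C = insert e (pedges xs)" unfolding vs(3) p1 p3 sp(2) by blast
    moreover have "distinct xs" using vs(2) sp(1) xs_def by auto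
    moreover have "length xs \<ge> 3" using sp(1) xs_def vs(1) by simp
    moreover have "e = {hd xs, last xs}" using xs_def sp(2) by (simp add: insert_commute)
    ultimately show ?thesis by blast
  qed
qed

theorem lemma5p2:
  assumes "simple_graph V E"
    and "valid_edge_partition V E T F"
  shows "card {C. C \<subseteq> E \<and> is_cycle C \<and> compatible T F C}
       = card {e \<in> T. \<forall>u\<in>e. \<forall>v\<in>e. conn F u v}"
proof -
  have ETF: "E = T \<union> F" and TF: "T \<inter> F = {}" and ac: "acyclic_edges F"
    using assms(2) unfolding valid_edge_partition_def spanning_2forest_def by auto
  let ?S = "{C. C \<subseteq> E \<and> is_cycle C \<and> compatible T F C}"
  let ?R = "{e \<in> T. \<forall>u\<in>e. \<forall>v\<in>e. conn F u v}"
  define phi where "phi C = the_elem (C \<inter> T)" for C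
  have key: "\<exists>e xs. C \<inter> T = {e} \<and> distinct xs \<and> length xs \<ge> 3 \<and> C = insert e (pedges xs)
      \<and> e = {hd xs, last xs} \<and> pedges xs \<subseteq> F" if "C \<in> ?S" for C
  proof -
    from that have C: "C \<subseteq> E" "is_cycle C" "card (C \<inter> T) = 1" unfolding compatible_def by auto
    then obtain e where e: "C \<inter> T = {e}" using card_1_singletonE by blast
    then have "e \<in> C" by blast
    from decomp[OF C(2) this] obtain xs where
      xs: "distinct xs" "length xs \<ge> 3" "C = insert e (pedges xs)" "e = {hd xs, last xs}"
      by blast
    have "pedges xs \<subseteq> F"
    proof
      fix p assume p: "p \<in> pedges xs"
      then have "p \<in> C" using xs(3) by blast
      then have "p \<in> T \<union> F" using C(1) ETF by blast
      moreover have "p \<notin> T"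
      proof
        assume "p \<in> T"
        then have "p \<in> C \<inter> T" using \<open>p \<in> C\<close> by blast
        then have "p = e" using e by blast
        then show False using closing_not_in[OF xs(1,2)] p xs(4) by simp
      qed
      ultimately show "p \<in> F" by blast
    qed
    then show ?thesis using xs e by blast
  qed
  have phie: "phi C = e" if "C \<inter> T = {e}" for C e
    unfolding phi_def that by simp
  have inj: "inj_on phi ?S"
  proof
    fix C1 C2 assume c1: "C1 \<in> ?S" and c2: "C2 \<in> ?S" and eq0: "phi C1 = phi C2"
    from key[OF c1] obtain e1 xs where xs: "C1 \<inter> T = {e1}" "distinct xs" "length xs \<ge> 3"
      "C1 = insert e1 (pedges xs)" "e1 = {hd xs, last xs}" "pedges xs \<subseteq> F" by blast
    from key[OF c2] obtain e2 zs where zs: "C2 \<inter> T = {e2}" "distinct zs" "length zs \<ge> 3"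
      "C2 = insert e2 (pedges zs)" "e2 = {hd zs, last zs}" "pedges zs \<subseteq> F" by blast
    have eq: "e1 = e2" using eq0 phie[OF xs(1)] phie[OF zs(1)] by simp
    note xs = xs(2-6) and zs = zs(2-6)
    have nx: "xs \<noteq> []" "zs \<noteq> []" using xs(2) zs(2) by auto
    have dd: "{hd xs, last xs} = {hd zs, last zs}" using xs(4) zs(4) eq by simp
    have disj: "(hd xs = hd zs \<and> last xs = last zs) \<or> (hd xs = last zs \<and> last xs = hd zs)"
      using dd by (simp only: doubleton_eq_iff)
    obtain ys where ys: "distinct ys" "ys \<noteq> []" "hd ys = hd xs" "last ys = last xs" "pedges ys = pedges zs"
    proof (cases "hd xs = hd zs \<and> last xs = last zs")
      case True
      show ?thesis by (rule that[of zs]) (use zs(1) nx(2) True in auto)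
    next
      case False
      then have h2: "hd xs = last zs" "last xs = hd zs" using disj by blast+
      show ?thesis
        by (rule that[of "rev zs"]) (use zs(1) nx(2) h2 in \<open>simp_all add: pedges_rev hd_rev last_rev\<close>)
    qed
    have pyF: "pedges ys \<subseteq> F" using ys(5) zs(5) by simp
    have s1: "pedges xs \<subseteq> pedges ys"
      by (rule path_unique[OF ac xs(1) nx(1) ys(2) ys(3)[symmetric] ys(4)[symmetric] xs(5) pyF])
    have s2: "pedges ys \<subseteq> pedges xs"
      by (rule path_unique[OF ac ys(1) ys(2) nx(1) ys(3) ys(4) pyF xs(5)])
    have "pedges xs = pedges ys" using s1 s2 by (rule subset_antisym)
    then show "C1 = C2" using xs(3) zs(3) ys(5) eq by simp
  qed
  have img: "phi ` ?S = ?R"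
  proof
    show "phi ` ?S \<subseteq> ?R"
    proof
      fix e assume "e \<in> phi ` ?S"
      then obtain C where C: "C \<in> ?S" "e = phi C" by blast
      from key[OF C(1)] obtain e' xs where xs: "C \<inter> T = {e'}" "C = insert e' (pedges xs)" by blast
      have "e = e'" using C(2) phie[OF xs(1)] by simp
      have "e \<in> T" using xs(1) \<open>e = e'\<close> by blast
      moreover have "e \<subseteq> \<Union>C" using xs(2) \<open>e = e'\<close> by blast
      moreover have "\<forall>u\<in>\<Union>C. \<forall>v\<in>\<Union>C. conn F u v" using C(1) unfolding compatible_def by blast
      ultimately show "e \<in> ?R" by blast
    qed
  next
    show "?R \<subseteq> phi ` ?S"
    proof
      fix e assume eR: "e \<in> ?R"
      then have "e \<in> E" using ETF by blast
      then obtain u v where uv: "e = {u,v}" "u \<noteq> v"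
        using assms(1) unfolding simple_graph_def by blast
      then have "conn F u v" using eR by blast
      from walk_to_path[OF this] obtain xs where xs: "distinct xs" "xs \<noteq> []" "hd xs = u" "last xs = v" "pedges xs \<subseteq> F"
        by blast
      have "e \<notin> F" using eR TF by blast
      then have ni: "{hd xs, last xs} \<notin> pedges xs" using xs(3,4,5) uv(1) by blast
      have "length xs \<ge> 3" using path_len3[OF xs(2) _ ni] xs(3,4) uv(2) by simp
      define C where "C = insert e (pedges xs)"
      have "C = insert {hd xs, last xs} (pedges xs)" using C_def uv(1) xs(3,4) by simp
      then have cyc: "is_cycle C" unfolding cycle_iff using \<open>length xs \<ge> 3\<close> xs(1) by blast
      have CE: "C \<subseteq> E" using C_def eR ETF xs(5) by blast
      have CT: "C \<inter> T = {e}" using C_def eR TF xs(5) by blast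
      have sub: "\<Union>C \<subseteq> set xs"
      proof
        fix w assume "w \<in> \<Union>C"
        then obtain c where c: "c \<in> C" "w \<in> c" by blast
        show "w \<in> set xs"
        proof (cases "c = e")
          case True
          then have "w = hd xs \<or> w = last xs" using c(2) uv(1) xs(3,4) by blast
          then show ?thesis using xs(2) by (metis hd_in_set last_in_set)
        next
          case False
          then have "c \<in> pedges xs" using c(1) C_def by blast
          then show ?thesis using pedges_subset c(2) by blast
        qed
      qed
      have cu: "conn F u w" if "w \<in> \<Union>C" for w
      proof -
        have "w \<in> set xs" using sub that by blast
        from conn_path[OF xs(5) this] show ?thesis unfolding xs(3) .
      qed
      have "\<forall>w1\<in>\<Union>C. \<forall>w2\<in>\<Union>C. conn F w1 w2"
      proof (intro ballI)
        fix w1 w2 assume "w1 \<in> \<Union>C" "w2 \<in> \<Union>C"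
        show "conn F w1 w2" by (rule conn_trans[OF conn_sym[OF cu] cu]) fact+
      qed
      then have "C \<in> ?S" using cyc CE CT unfolding compatible_def by simp
      moreover have "phi C = e" using phie[OF CT] .
      ultimately show "e \<in> phi ` ?S" by blast
    qed
  qed
  have "bij_betw phi ?S ?R" unfolding bij_betw_def using inj img by (rule conjI)
  then show ?thesis by (rule bij_betw_same_card)
qed

end
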